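(* Let $\boldsymbol\mu>\mathbf 0$, assume every matrix in $\mathcal Z(\boldsymbol\mu)$ is irreducible, and assume $\mathcal Z(\boldsymbol\mu)$ is a primitive set. For the iteration started from an arbitrary $\mathbf p^{(0)}>\mathbf 0$ — namely $y_i^{(k)}=\max_{k_i\in\mathcal K_i}\big(\mathbf e_i^T-\mathbf a_i^{k_i}(\boldsymbol\mu)\big)\mathbf p^{(k)}$, $\beta^{(k)}=\min_i p_i^{(k)}/y_i^{(k)}$, $\mathbf p^{(k+1)}=\mathbf y^{(k)}/\|\mathbf y^{(k)}\|$ — the sequence $\beta^{(k)}$ converges to $\beta^*=1/\max_{\mathbf Z\in\mathcal Z(\boldsymbol\mu)}\lambda(\mathbf Z)$, and $\mathbf p^{(k)}$ converges to a vector $\mathbf p^*$ such that $\lim_{\alpha\to\infty}\Gamma(\alpha\mathbf p^* )=\beta^*\boldsymbol\mu$.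
   Context: Multicast system: $N$ transmitters $T_1,\dots,T_N$; transmitter $T_i$ has $K_i\geq1$ receivers $R_i^{k}$, $k\in\mathcal K_i=\{1,\dots,K_i\}$. Channel gains $g_{r_i^{k},t_j}\geq 0$ (from $T_j$ to $R_i^k$) with $g_{r_i^{k},t_i}>0$; noise variance $\sigma^2>0$. SINR: $\gamma_i^{k}(\mathbf p)=\frac{g_{r_i^{k},t_i}p_i}{\sum_{j\neq i}g_{r_i^{k},t_j}p_j+\sigma^2}$, $\gamma_i(\mathbf p)=\min_{k\in\mathcal K_i}\gamma_i^k(\mathbf p)$, $\Gamma(\mathbf p)=(\gamma_1(\mathbf p),\dots,\gamma_N(\mathbf p))$. For $\boldsymbol\mu\in\mathbb R^N$, $\mathbf a_i^{k}(\boldsymbol\mu)\in\mathbb R^{1\times N}$ is the row vector with $i$-th entry $1$ and $j$-th entry $-\mu_i g_{r_i^{k},t_j}/g_{r_i^{k},t_i}$ for $j\neq i$. $\mathcal G(\boldsymbol\mu)$ is the set of $N\times N$ matrices whose $i$-th row is $\mathbf a_i^{k_i}(\boldsymbol\mu)$ for some $k_i\in\mathcal K_i$; $\mathcal Z(\boldsymbol\mu)=\{\mathbf I-\mathbf G:\mathbf G\in\mathcal G(\boldsymbol\mu)\}$. A finite set $\mathcal Z$ of nonnegative $N\times N$ matrices is primitive if there is a positive integer $n$ such that every product of $n$ matrices from $\mathcal Z$ (any order, repetitions allowed) has all entries positive. $\mathbf e_i$ is the $i$-th standard basis vector, $\|\cdot\|$ the Euclidean norm, $\lambda(\cdot)$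 the Perron–Frobenius eigenvalue (spectral radius). *)

theory Defs
  imports "HOL-Analysis.Analysis"
begin

text \<open>Indices of transmitters: a finite type 'n (N = CARD('n)).
  Receivers of transmitter i: indices k < K i (0-based), K i \<ge> 1.
  g i k j : channel gain from T_j to receiver R_i^k.\<close>

text \<open>Row vector a_i^k(mu).\<close>
definition a_row :: "('n::finite \<Rightarrow> nat \<Rightarrow> 'n \<Rightarrow> real) \<Rightarrow> real^'n \<Rightarrow> 'n \<Rightarrow> nat \<Rightarrow> real^'n" where
  "a_row g mu i k = (\<chi> j. if j = i then 1 else - (mu $ i) * g i k j / g i k i)"

definition unit_vec :: "'n::finite \<Rightarrow> real^'n" where
  "unit_vec i = (\<chi> j. if j = i then 1 else 0)"

text \<open>The set G(mu).\<close>
definition Gset :: "('n::finite \<Rightarrow> nat) \<Rightarrow> ('n \<Rightarrow> nat \<Rightarrow> 'n \<Rightarrow> real) \<Rightarrow> real^'n \<Rightarrow> (real^'n^'n) set" where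
  "Gset K g mu = {(\<chi> i. a_row g mu i (\<kappa> i)) | \<kappa>. \<forall>i. \<kappa> i < K i}"

text \<open>The set Z(mu) = {I - G | G in G(mu)}.\<close>
definition Zset :: "('n::finite \<Rightarrow> nat) \<Rightarrow> ('n \<Rightarrow> nat \<Rightarrow> 'n \<Rightarrow> real) \<Rightarrow> real^'n \<Rightarrow> (real^'n^'n) set" where
  "Zset K g mu = {mat 1 - G | G. G \<in> Gset K g mu}"

text \<open>Irreducible (nonnegative) matrix: its directed graph (edge i\<rightarrow>j iff A_ij \<noteq> 0)
  is strongly connected.\<close>
definition irreducible_mat :: "real^'n^'n \<Rightarrow> bool" where
  "irreducible_mat A \<longleftrightarrow> (\<forall>i j. i \<noteq> j \<longrightarrow> (i, j) \<in> {(i, j). A $ i $ j \<noteq> 0}\<^sup>+)"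

text \<open>Primitive finite set of nonnegative matrices.\<close>
definition primitive_set :: "(real^'n^'n) set \<Rightarrow> bool" where
  "primitive_set Z \<longleftrightarrow> (\<exists>n::nat. n > 0 \<and>
     (\<forall>Ms. length Ms = n \<and> set Ms \<subseteq> Z \<longrightarrow> (\<forall>i j. foldr (**) Ms (mat 1) $ i $ j > 0)))"

text \<open>Spectral radius: maximal modulus of a (complex) eigenvalue.\<close>
definition spectral_radius :: "real^'n::finite^'n \<Rightarrow> real" where
  "spectral_radius A = Sup (cmod ` {c. \<exists>v::complex^'n. v \<noteq> 0 \<and>
      (\<chi> i j. complex_of_real (A $ i $ j)) *v v = c *s v})"

text \<open>SINR.\<close>
definition sinr_k :: "('n::finite \<Rightarrow> nat \<Rightarrow> 'n \<Rightarrow> real) \<Rightarrow> real \<Rightarrow> real^'n \<Rightarrow> 'n \<Rightarrow> nat \<Rightarrow> real" where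
  "sinr_k g sigma2 p i k = g i k i * p $ i / ((\<Sum>j\<in>UNIV - {i}. g i k j * p $ j) + sigma2)"

definition sinr :: "('n::finite \<Rightarrow> nat) \<Rightarrow> ('n \<Rightarrow> nat \<Rightarrow> 'n \<Rightarrow> real) \<Rightarrow> real \<Rightarrow> real^'n \<Rightarrow> 'n \<Rightarrow> real" where
  "sinr K g sigma2 p i = Min ((sinr_k g sigma2 p i) ` {..<K i})"

definition Gamma :: "('n::finite \<Rightarrow> nat) \<Rightarrow> ('n \<Rightarrow> nat \<Rightarrow> 'n \<Rightarrow> real) \<Rightarrow> real \<Rightarrow> real^'n \<Rightarrow> real^'n" where
  "Gamma K g sigma2 p = (\<chi> i. sinr K g sigma2 p i)"

text \<open>The iteration map: y_i = max_k (e_i^T - a_i^k(mu)) p.\<close>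
definition yvec :: "('n::finite \<Rightarrow> nat) \<Rightarrow> ('n \<Rightarrow> nat \<Rightarrow> 'n \<Rightarrow> real) \<Rightarrow> real^'n \<Rightarrow> real^'n \<Rightarrow> real^'n" where
  "yvec K g mu p = (\<chi> i. Max ((\<lambda>k. (unit_vec i - a_row g mu i k) \<bullet> p) ` {..<K i}))"

definition beta_of :: "('n::finite \<Rightarrow> nat) \<Rightarrow> ('n \<Rightarrow> nat \<Rightarrow> 'n \<Rightarrow> real) \<Rightarrow> real^'n \<Rightarrow> real^'n \<Rightarrow> real" where
  "beta_of K g mu p = Min ((\<lambda>i. p $ i / yvec K g mu p $ i) ` UNIV)"

end

theory Submission
  imports Defs
begin



lemma tendsto_Max_finite:
  fixes f :: "'a \<Rightarrow> 'b \<Rightarrow> real"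
  assumes "finite A" "A \<noteq> {}" "\<And>a. a \<in> A \<Longrightarrow> (f a \<longlongrightarrow> l a) F"
  shows "((\<lambda>x. Max ((\<lambda>a. f a x) ` A)) \<longlongrightarrow> Max (l ` A)) F"
  using assms
proof (induction A rule: finite_ne_induct)
  case (singleton x) thus ?case by simp
next
  case (insert x A)
  have "((\<lambda>y. max (f x y) (Max ((\<lambda>a. f a y) ` A))) \<longlongrightarrow> max (l x) (Max (l ` A))) F"
    using insert by (intro tendsto_max) auto
  thus ?case using insert by (simp add: Max_insert)
qed

lemma tendsto_Min_finite:
  fixes f :: "'a \<Rightarrow> 'b \<Rightarrow> real"
  assumes "finite A" "A \<noteq> {}" "\<And>a. a \<in> A \<Longrightarrow> (f a \<longlongrightarrow> l a) F"
  shows "((\<lambda>x. Min ((\<lambda>a. f a x) ` A)) \<longlongrightarrow> Min (l ` A)) F"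
  using assms
proof (induction A rule: finite_ne_induct)
  case (singleton x) thus ?case by simp
next
  case (insert x A)
  have "((\<lambda>y. min (f x y) (Min ((\<lambda>a. f a y) ` A))) \<longlongrightarrow> min (l x) (Min (l ` A))) F"
    using insert by (intro tendsto_min) auto
  thus ?case using insert by (simp add: Min_insert)
qed

definition cmat :: "real^'n::finite^'n \<Rightarrow> complex^'n^'n" where
  "cmat A = (\<chi> i j. complex_of_real (A $ i $ j))"

lemma eigen_bound:
  fixes Z :: "real^'n::finite^'n"
  assumes nn: "\<And>i j. Z$i$j \<ge> 0" and q: "\<And>i. q$i > 0"
    and Zq: "\<And>i. (Z *v q)$i \<le> \<rho> * q$i"
    and ev: "cmat Z *v v = c *s v" and v0: "v \<noteq> 0"
  shows "cmod c \<le> \<rho>"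
proof -
  define h where "h i = cmod (v$i) / q$i" for i
  have "Max (range h) \<in> range h" by (rule Max_in) auto
  then obtain i0 where i0: "h i0 = Max (range h)" by (metis imageE)
  have hle: "h j \<le> h i0" for j using i0 by simp
  obtain j where "v$j \<noteq> 0" using v0 by (metis vec_eq_iff zero_index)
  hence "h j > 0" using q[of j] by (simp add: h_def)
  hence t: "h i0 > 0" using hle[of j] by linarith
  have vj: "cmod (v$j) \<le> h i0 * q$j" for j
    using hle[of j] q[of j] by (simp add: h_def field_simps)
  have vi0: "cmod (v$i0) = h i0 * q$i0" using q[of i0] by (simp add: h_def)
  have "cmod c * cmod (v$i0) = cmod ((c *s v)$i0)" by (simp add: norm_mult)
  also have "\<dots> = cmod ((cmat Z *v v)$i0)" using ev by simp
  also have "\<dots> = cmod (\<Sum>j\<in>UNIV. complex_of_real (Z$i0$j) * v$j)"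
    by (simp add: matrix_vector_mult_def cmat_def)
  also have "\<dots> \<le> (\<Sum>j\<in>UNIV. Z$i0$j * cmod (v$j))"
    by (rule order_trans[OF norm_sum]) (simp add: norm_mult nn)
  also have "\<dots> \<le> (\<Sum>j\<in>UNIV. Z$i0$j * (h i0 * q$j))"
    by (rule sum_mono) (simp add: mult_left_mono nn vj)
  also have "\<dots> = h i0 * (Z *v q)$i0"
    by (simp add: matrix_vector_mult_def sum_distrib_left algebra_simps)
  also have "\<dots> \<le> h i0 * (\<rho> * q$i0)" using Zq t by simp
  also have "\<dots> = \<rho> * cmod (v$i0)" using vi0 by simp
  finally have "cmod c * cmod (v$i0) \<le> \<rho> * cmod (v$i0)" .
  moreover have "cmod (v$i0) > 0" using vi0 t q[of i0] by simp
  ultimately show ?thesis by simp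
qed




locale maxsys =
  fixes Zs :: "(real^'n::finite^'n) set"
  assumes fin: "finite Zs" and ne: "Zs \<noteq> {}"
    and nonneg: "\<And>Z i j. Z \<in> Zs \<Longrightarrow> Z$i$j \<ge> 0"
    and rowind: "\<And>x. \<exists>Z\<in>Zs. \<forall>Z'\<in>Zs. \<forall>i. (Z' *v x)$i \<le> (Z *v x)$i"
    and prim: "primitive_set Zs"
begin

definition F :: "real^'n \<Rightarrow> real^'n" where
  "F x = (\<chi> i. Max ((\<lambda>Z. (Z *v x)$i) ` Zs))"

lemma F_ge: "Z \<in> Zs \<Longrightarrow> (Z *v x)$i \<le> F x $ i"
  unfolding F_def using fin by (auto intro: Max_ge)

lemma F_eq: "\<exists>Z\<in>Zs. F x = Z *v x"
proof -
  obtain Z where Z: "Z\<in>Zs" "\<forall>Z'\<in>Zs. \<forall>i. (Z' *v x)$i \<le> (Z *v x)$i" using rowind by blast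
  have "F x $ i = (Z *v x)$i" for i
    unfolding F_def using fin Z by (auto intro!: Max_eqI)
  thus ?thesis using Z(1) by (auto simp: vec_eq_iff)
qed

lemma mv_mono: "Z \<in> Zs \<Longrightarrow> (\<And>j. x$j \<le> y$j) \<Longrightarrow> (Z *v x)$i \<le> (Z *v y)$i"
  unfolding matrix_vector_mult_def using nonneg
  by (auto intro!: sum_mono mult_left_mono)

lemma F_mono: "(\<And>j. x$j \<le> y$j) \<Longrightarrow> F x $ i \<le> F y $ i"
proof -
  assume h: "\<And>j. x$j \<le> y$j"
  obtain Z where Z: "Z \<in> Zs" "F x = Z *v x" using F_eq by blast
  have "(Z *v x)$i \<le> (Z *v y)$i" using mv_mono[OF Z(1) h] .
  also have "\<dots> \<le> F y $ i" using F_ge[OF Z(1)] .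
  finally show ?thesis using Z by simp
qed

lemma mv_scale: "((Z::real^'n^'n) *v (t *\<^sub>R x)) = t *\<^sub>R (Z *v x)"
  by (simp add: matrix_vector_mult_def vec_eq_iff sum_distrib_left mult.left_commute)

lemma F_scale: assumes "t \<ge> 0" shows "F (t *\<^sub>R x) = t *\<^sub>R F x"
proof -
  obtain Z1 where Z1: "Z1 \<in> Zs" "F (t *\<^sub>R x) = Z1 *v (t *\<^sub>R x)" using F_eq by blast
  obtain Z2 where Z2: "Z2 \<in> Zs" "F x = Z2 *v x" using F_eq by blast
  have "F (t *\<^sub>R x) $ i = t * F x $ i" for i
  proof (rule antisym)
    have "F (t *\<^sub>R x) $ i = t * (Z1 *v x)$i" using Z1 by (simp add: mv_scale)
    also have "\<dots> \<le> t * F x $ i" using F_ge[OF Z1(1)] assms by (simp add: mult_left_mono)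
    finally show "F (t *\<^sub>R x) $ i \<le> t * F x $ i" .
    have "t * F x $ i = (Z2 *v (t *\<^sub>R x))$i" using Z2 by (simp add: mv_scale)
    also have "\<dots> \<le> F (t *\<^sub>R x) $ i" using F_ge[OF Z2(1)] .
    finally show "t * F x $ i \<le> F (t *\<^sub>R x) $ i" .
  qed
  thus ?thesis by (simp add: vec_eq_iff)
qed

definition "nprim = (SOME n::nat. n > 0 \<and>
     (\<forall>Ms. length Ms = n \<and> set Ms \<subseteq> Zs \<longrightarrow> (\<forall>i j. foldr (**) Ms (mat 1) $ i $ j > 0)))"

lemma nprim: "nprim > 0" "length Ms = nprim \<Longrightarrow> set Ms \<subseteq> Zs \<Longrightarrow> foldr (**) Ms (mat 1) $ i $ j > 0"
proof -
  have "\<exists>n::nat. n > 0 \<and>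
     (\<forall>Ms. length Ms = n \<and> set Ms \<subseteq> Zs \<longrightarrow> (\<forall>i j. foldr (**) Ms (mat 1) $ i $ j > 0))"
    using prim unfolding primitive_set_def .
  from someI_ex[OF this] show "nprim > 0" "length Ms = nprim \<Longrightarrow> set Ms \<subseteq> Zs \<Longrightarrow> foldr (**) Ms (mat 1) $ i $ j > 0"
    unfolding nprim_def by blast+
qed

lemma row_pos: assumes "Z \<in> Zs" shows "\<exists>l. Z$i$l > 0"
proof (rule ccontr)
  assume "\<not> ?thesis"
  hence z: "Z$i$l = 0" for l using nonneg[OF assms, of i l] by (meson antisym not_le)
  define Q where "Q = foldr (**) (replicate (nprim - 1) Z) (mat 1)"
  have "replicate nprim Z = Z # replicate (nprim - 1) Z" using nprim(1)
    by (cases nprim) auto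
  hence "foldr (**) (replicate nprim Z) (mat 1) = Z ** Q" by (simp add: Q_def)
  moreover have "foldr (**) (replicate nprim Z) (mat 1) $ i $ i > 0"
    using assms by (intro nprim(2)) auto
  moreover have "(Z ** Q) $ i $ i = 0" by (simp add: matrix_matrix_mult_def z)
  ultimately show False by simp
qed

definition pos :: "real^'n \<Rightarrow> bool" where "pos x \<longleftrightarrow> (\<forall>i. x$i > 0)"

lemma F_pos: assumes "pos x" shows "pos (F x)"
  unfolding pos_def
proof
  fix i
  obtain Z where Z: "Z \<in> Zs" using ne by blast
  obtain l where l: "Z$i$l > 0" using row_pos[OF Z] by blast
  have "0 < Z$i$l * x$l" using l assms by (simp add: pos_def)
  also have "\<dots> \<le> (Z *v x)$i" unfolding matrix_vector_mult_def
    using nonneg[OF Z] assms by (auto intro!: member_le_sum simp: pos_def less_imp_le)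
  also have "\<dots> \<le> F x $ i" by (rule F_ge[OF Z])
  finally show "F x $ i > 0" .
qed

end



context maxsys begin

abbreviation prodm :: "(real^'n^'n) list \<Rightarrow> real^'n^'n" where
  "prodm Ms \<equiv> foldr (**) Ms (mat 1)"

lemma funpow_prod: "\<exists>Ms. set Ms \<subseteq> Zs \<and> length Ms = j \<and> (F^^j) x = prodm Ms *v x"
proof (induction j)
  case 0 show ?case by (intro exI[of _ "[]"]) simp
next
  case (Suc j)
  then obtain Ms where Ms: "set Ms \<subseteq> Zs" "length Ms = j" "(F^^j) x = prodm Ms *v x" by blast
  obtain Z where Z: "Z \<in> Zs" "F (prodm Ms *v x) = Z *v (prodm Ms *v x)" using F_eq by blast
  have "(F^^Suc j) x = prodm (Z # Ms) *v x"
    using Z(2) by (simp add: Ms(3) matrix_vector_mul_assoc)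
  thus ?case using Ms Z(1)
    by (intro exI[of _ "Z # Ms"]) simp
qed

lemma funpow_ge: "set Ms \<subseteq> Zs \<Longrightarrow> \<forall>i. (prodm Ms *v x)$i \<le> (F^^length Ms) x $ i"
proof (induction Ms)
  case Nil show ?case by simp
next
  case (Cons Z Ms)
  hence Z: "Z \<in> Zs" and IH: "\<forall>i. (prodm Ms *v x)$i \<le> (F^^length Ms) x $ i" by auto
  show ?case
  proof
    fix i
    have "(prodm (Z # Ms) *v x)$i = (Z *v (prodm Ms *v x))$i"
      by (simp add: matrix_vector_mul_assoc)
    also have "\<dots> \<le> (Z *v ((F^^length Ms) x))$i" using mv_mono[OF Z] IH by blast
    also have "\<dots> \<le> F ((F^^length Ms) x) $ i" by (rule F_ge[OF Z])
    finally show "(prodm (Z # Ms) *v x)$i \<le> (F^^length (Z # Ms)) x $ i" by simp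
  qed
qed

lemma funpow_scale: "t \<ge> 0 \<Longrightarrow> (F^^j) (t *\<^sub>R x) = t *\<^sub>R (F^^j) x"
  by (induction j) (auto simp: F_scale)

lemma funpow_pos: "pos x \<Longrightarrow> pos ((F^^j) x)"
  by (induction j) (auto simp: F_pos)

definition "PS = prodm ` {Ms. set Ms \<subseteq> Zs \<and> length Ms = nprim}"

lemma PS_fin: "finite PS" unfolding PS_def using finite_lists_length_eq[OF fin] by simp

lemma PS_ne: "PS \<noteq> {}"
proof -
  obtain Z where "Z \<in> Zs" using ne by blast
  hence "replicate nprim Z \<in> {Ms. set Ms \<subseteq> Zs \<and> length Ms = nprim}" by auto
  thus ?thesis unfolding PS_def by blast
qed

lemma PS_pos: "P \<in> PS \<Longrightarrow> P$i$j > 0" unfolding PS_def using nprim(2) by auto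

definition "Ent = (\<lambda>(P,i,j). P$i$j) ` (PS \<times> UNIV \<times> UNIV)"
definition "cc = Min Ent"
definition "CC = Max Ent"

lemma Ent_fin: "finite Ent" "Ent \<noteq> {}"
  unfolding Ent_def using PS_fin PS_ne by auto

lemma in_Ent: "P \<in> PS \<Longrightarrow> P$i$j \<in> Ent"
  unfolding Ent_def by (rule image_eqI[of _ _ "(P,i,j)"]) auto

lemma cc_le: "P \<in> PS \<Longrightarrow> cc \<le> P$i$j"
  unfolding cc_def using Ent_fin in_Ent by (intro Min_le) auto

lemma CC_ge: "P \<in> PS \<Longrightarrow> P$i$j \<le> CC"
  unfolding CC_def using Ent_fin in_Ent by (intro Max_ge) auto

lemma cc_pos: "cc > 0"
proof -
  have "cc \<in> Ent" unfolding cc_def using Ent_fin by (rule Min_in)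
  thus ?thesis unfolding Ent_def using PS_pos by auto
qed

lemma cc_CC: "cc \<le> CC"
proof -
  obtain P where "P \<in> PS" using PS_ne by blast
  thus ?thesis using cc_le CC_ge by (meson order_trans)
qed

abbreviation T where "T \<equiv> F^^nprim"

lemma T_prod: "\<exists>P\<in>PS. T x = P *v x"
  using funpow_prod[of nprim x] unfolding PS_def by blast

lemma T_ge: "P \<in> PS \<Longrightarrow> (P *v x)$i \<le> T x $ i"
proof -
  assume "P \<in> PS"
  then obtain Ms where Ms: "P = prodm Ms" "set Ms \<subseteq> Zs" "length Ms = nprim"
    unfolding PS_def by blast
  show ?thesis using funpow_ge[OF Ms(2), of x] Ms by simp
qed

lemma T_upper: assumes "\<And>j. x$j \<ge> 0" shows "T x $ i \<le> CC * sum (\<lambda>j. x$j) UNIV"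
proof -
  obtain P where P: "P \<in> PS" "T x = P *v x" using T_prod by blast
  have "(P *v x)$i = (\<Sum>j\<in>UNIV. P$i$j * x$j)" by (simp add: matrix_vector_mult_def)
  also have "\<dots> \<le> (\<Sum>j\<in>UNIV. CC * x$j)"
    by (rule sum_mono) (simp add: mult_right_mono CC_ge[OF P(1)] assms)
  finally show ?thesis using P by (simp add: sum_distrib_left)
qed

lemma T_diff: assumes "\<And>j. u$j \<le> v$j"
  shows "T u $ i + cc * sum (\<lambda>j. v$j - u$j) UNIV \<le> T v $ i"
proof -
  obtain P where P: "P \<in> PS" "T u = P *v u" using T_prod by blast
  have "T u $ i + cc * sum (\<lambda>j. v$j - u$j) UNIV
      = (\<Sum>j\<in>UNIV. P$i$j * u$j + cc * (v$j - u$j))"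
    using P by (simp add: matrix_vector_mult_def sum_distrib_left sum.distrib)
  also have "\<dots> \<le> (\<Sum>j\<in>UNIV. P$i$j * u$j + P$i$j * (v$j - u$j))"
    by (rule sum_mono) (simp add: mult_right_mono cc_le[OF P(1)] assms)
  also have "\<dots> = (P *v v)$i"
    by (simp add: matrix_vector_mult_def algebra_simps)
  also have "\<dots> \<le> T v $ i" by (rule T_ge[OF P(1)])
  finally show ?thesis .
qed

end



context maxsys begin

definition mx :: "real^'n \<Rightarrow> real" where "mx x = Min ((\<lambda>i. F x $ i / x $ i) ` UNIV)"
definition Mx :: "real^'n \<Rightarrow> real" where "Mx x = Max ((\<lambda>i. F x $ i / x $ i) ` UNIV)"

lemma mx_le: "pos x \<Longrightarrow> mx x * x$i \<le> F x $ i"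
proof -
  assume p: "pos x"
  have "mx x \<le> F x $ i / x $ i" unfolding mx_def by (rule Min_le) auto
  thus ?thesis using p by (simp add: pos_def pos_le_divide_eq)
qed

lemma Mx_ge: "pos x \<Longrightarrow> F x $ i \<le> Mx x * x$i"
proof -
  assume p: "pos x"
  have "F x $ i / x $ i \<le> Mx x" unfolding Mx_def by (rule Max_ge) auto
  thus ?thesis using p by (simp add: pos_def divide_le_eq)
qed

lemma mx_greatest: "pos x \<Longrightarrow> (\<And>i. a * x$i \<le> F x $ i) \<Longrightarrow> a \<le> mx x"
  unfolding mx_def by (auto intro!: Min.boundedI simp: pos_def pos_le_divide_eq)

lemma Mx_least: "pos x \<Longrightarrow> (\<And>i. F x $ i \<le> b * x$i) \<Longrightarrow> Mx x \<le> b"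
  unfolding Mx_def by (auto intro!: Max.boundedI simp: pos_def divide_le_eq)

lemma mx_pos: "pos x \<Longrightarrow> mx x > 0"
  unfolding mx_def using F_pos by (auto simp: pos_def)

lemma mx_Mx: "pos x \<Longrightarrow> mx x \<le> Mx x"
proof -
  assume p: "pos x"
  fix i
  have "mx x * x$i \<le> Mx x * x$i" using mx_le[OF p, of i] Mx_ge[OF p, of i] by linarith
  moreover have "x$i > 0" using p by (simp add: pos_def)
  ultimately show ?thesis by (rule mult_right_le_imp_le)
qed

lemma mx_scale: "t > 0 \<Longrightarrow> mx (t *\<^sub>R x) = mx x"
  unfolding mx_def using F_scale[of t x] by simp

lemma Mx_scale: "t > 0 \<Longrightarrow> Mx (t *\<^sub>R x) = Mx x"
  unfolding Mx_def using F_scale[of t x] by simp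

lemma mx_mono: assumes "pos x" shows "mx x \<le> mx (F x)"
proof (rule mx_greatest)
  show "pos (F x)" using F_pos[OF assms] .
  fix i
  have "mx x * F x $ i = F (mx x *\<^sub>R x) $ i"
    using F_scale[of "mx x" x] mx_pos[OF assms] by simp
  also have "\<dots> \<le> F (F x) $ i" by (rule F_mono) (use mx_le[OF assms] in simp)
  finally show "mx x * F x $ i \<le> F (F x) $ i" .
qed

lemma Mx_mono: assumes "pos x" shows "Mx (F x) \<le> Mx x"
proof (rule Mx_least)
  show "pos (F x)" using F_pos[OF assms] .
  fix i
  have "F (F x) $ i \<le> F (Mx x *\<^sub>R x) $ i" by (rule F_mono) (use Mx_ge[OF assms] in simp)
  also have "\<dots> = Mx x * F x $ i"
    using F_scale[of "Mx x" x] mx_pos[OF assms] mx_Mx[OF assms] by simp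
  finally show "F (F x) $ i \<le> Mx x * F x $ i" .
qed

definition "\<theta> = 1 - cc / CC"

lemma theta: "0 \<le> \<theta>" "\<theta> < 1"
  using cc_pos cc_CC by (auto simp: \<theta>_def)

lemma contract: assumes px: "pos x" shows "Mx (T x) - mx (T x) \<le> \<theta> * (Mx x - mx x)"
proof -
  define m where "m = mx x"
  define M where "M = Mx x"
  define y where "y = T x"
  define s where "s = sum (\<lambda>j. x$j) UNIV"
  define a where "a = sum (\<lambda>j. F x $ j - m * x$j) UNIV"
  define b where "b = sum (\<lambda>j. M * x$j - F x $ j) UNIV"
  have m0: "m > 0" using mx_pos[OF px] by (simp add: m_def)
  have mM: "m \<le> M" using mx_Mx[OF px] by (simp add: m_def M_def)
  have s0: "s > 0" unfolding s_def using px
    by (intro sum_pos) (auto simp: pos_def)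
  have a0: "a \<ge> 0" unfolding a_def using mx_le[OF px] by (intro sum_nonneg) (simp add: m_def)
  have b0: "b \<ge> 0" unfolding b_def using Mx_ge[OF px] by (intro sum_nonneg) (simp add: M_def)
  have ab: "a + b = (M - m) * s"
    unfolding a_def b_def s_def by (simp add: sum.distrib[symmetric] sum_distrib_left algebra_simps sum_subtractf)
  have py: "pos y" unfolding y_def using funpow_pos[OF px] .
  have Fy: "F y = T (F x)" unfolding y_def by (simp add: funpow_swap1)
  have CC0: "CC > 0" using cc_pos cc_CC by linarith
  have yup: "y$i \<le> CC * s" for i
    unfolding y_def s_def using px by (intro T_upper) (auto simp: pos_def less_imp_le)
  have yC: "y$i / (CC * s) \<le> 1" for i using yup[of i] CC0 s0 by simp
  have low: "(m + cc * a / (CC * s)) * y$i \<le> F y $ i" for i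
  proof -
    have "T (m *\<^sub>R x) $ i + cc * a \<le> T (F x) $ i"
      using T_diff[of "m *\<^sub>R x" "F x" i] mx_le[OF px] by (simp add: a_def m_def)
    moreover have "T (m *\<^sub>R x) = m *\<^sub>R y" unfolding y_def using funpow_scale m0 by simp
    moreover have "cc * a / (CC * s) * y$i \<le> cc * a"
    proof -
      have "cc * a / (CC * s) * y$i = (cc * a) * (y$i / (CC * s))" by simp
      also have "\<dots> \<le> cc * a" using yC[of i] cc_pos a0
        by (intro mult_left_le) auto
      finally show ?thesis .
    qed
    ultimately show ?thesis using Fy by (simp add: algebra_simps)
  qed
  have up: "F y $ i \<le> (M - cc * b / (CC * s)) * y$i" for i
  proof -
    have "T (F x) $ i + cc * b \<le> T (M *\<^sub>R x) $ i"
      using T_diff[of "F x" "M *\<^sub>R x" i] Mx_ge[OF px] by (simp add: b_def M_def)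
    moreover have "T (M *\<^sub>R x) = M *\<^sub>R y" unfolding y_def using funpow_scale m0 mM by simp
    moreover have "cc * b / (CC * s) * y$i \<le> cc * b"
    proof -
      have "cc * b / (CC * s) * y$i = (cc * b) * (y$i / (CC * s))" by simp
      also have "\<dots> \<le> cc * b" using yC[of i] cc_pos b0
        by (intro mult_left_le) auto
      finally show ?thesis .
    qed
    ultimately show ?thesis using Fy by (simp add: algebra_simps)
  qed
  have "m + cc * a / (CC * s) \<le> mx y" by (rule mx_greatest[OF py low])
  moreover have "Mx y \<le> M - cc * b / (CC * s)" by (rule Mx_least[OF py up])
  ultimately have "Mx y - mx y \<le> (M - m) - cc * (a + b) / (CC * s)"
    by (simp add: add_divide_distrib algebra_simps)
  also have "\<dots> = (M - m) - cc / CC * (M - m)"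
    unfolding ab using s0 CC0 by (simp add: field_simps)
  finally show ?thesis by (simp add: y_def M_def m_def \<theta>_def algebra_simps)
qed

end



context maxsys begin

lemma pos_scale: "pos x \<Longrightarrow> t > 0 \<Longrightarrow> pos (t *\<^sub>R x)"
  by (simp add: pos_def)

lemma pos_norm: "pos x \<Longrightarrow> norm x > 0"
proof -
  assume "pos x"
  obtain i :: 'n where True by simp
  have "x \<noteq> 0" using \<open>pos x\<close> by (auto simp: pos_def dest: spec[of _ i])
  thus ?thesis by simp
qed

lemma F_vec_tendsto:
  assumes "p \<longlonglongrightarrow> q" shows "(\<lambda>k. F (p k) $ i) \<longlonglongrightarrow> F q $ i"
proof -
  have "(\<lambda>k. Max ((\<lambda>Z. (Z *v p k)$i) ` Zs)) \<longlonglongrightarrow> Max ((\<lambda>Z. (Z *v q)$i) ` Zs)"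
  proof (rule tendsto_Max_finite[OF fin ne])
    fix Z assume "Z \<in> Zs"
    have "(\<lambda>k. \<Sum>j\<in>UNIV. Z$i$j * p k $ j) \<longlonglongrightarrow> (\<Sum>j\<in>UNIV. Z$i$j * q $ j)"
      by (intro tendsto_sum tendsto_mult_left tendsto_vec_nth assms)
    thus "(\<lambda>k. (Z *v p k)$i) \<longlonglongrightarrow> (Z *v q)$i" by (simp add: matrix_vector_mult_def)
  qed
  thus ?thesis by (simp add: F_def)
qed

lemma iteration:
  fixes p :: "nat \<Rightarrow> real^'n"
  assumes p0: "pos (p 0)" and pstep: "\<And>k. p (Suc k) = (1 / norm (F (p k))) *\<^sub>R F (p k)"
  shows "\<exists>\<rho> q. \<rho> > 0 \<and> pos q \<and> F q = \<rho> *\<^sub>R q \<and> (\<lambda>k. Mx (p k)) \<longlonglongrightarrow> \<rho> \<and> p \<longlonglongrightarrow> q"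
proof -
  have pp: "pos (p k)" for k
  proof (induction k)
    case 0 show ?case using p0 .
  next
    case (Suc k)
    thus ?case using pstep[of k] F_pos pos_norm pos_scale by simp
  qed
  have nF: "norm (F (p k)) > 0" for k using pos_norm F_pos pp by blast
  have mxS: "mx (p (Suc k)) = mx (F (p k))" for k using pstep[of k] mx_scale nF[of k] by simp
  have MxS: "Mx (p (Suc k)) = Mx (F (p k))" for k using pstep[of k] Mx_scale nF[of k] by simp
  have inc: "mx (p k) \<le> mx (p (Suc k))" for k using mxS mx_mono pp by simp
  have dec: "Mx (p (Suc k)) \<le> Mx (p k)" for k using MxS Mx_mono pp by simp
  have incs: "incseq (\<lambda>k. mx (p k))" using inc by (rule incseq_SucI)
  have decs: "decseq (\<lambda>k. Mx (p k))" using dec by (rule decseq_SucI)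
  define m0 where "m0 = mx (p 0)"
  have m0p: "m0 > 0" using mx_pos p0 by (simp add: m0_def)
  have mge: "m0 \<le> mx (p k)" for k using incs by (simp add: incseq_def m0_def)
  have mM: "mx (p k) \<le> Mx (p k)" for k using mx_Mx pp by blast
  have jump: "\<exists>t>0. p (k + j) = t *\<^sub>R (F^^j) (p k)" for k j
  proof (induction j)
    case 0 show ?case by (intro exI[of _ 1]) simp
  next
    case (Suc j)
    then obtain t where t: "t > 0" "p (k + j) = t *\<^sub>R (F^^j) (p k)" by blast
    have "p (k + Suc j) = (1 / norm (F (p (k+j)))) *\<^sub>R F (t *\<^sub>R (F^^j) (p k))"
      using pstep[of "k+j"] t by simp
    also have "\<dots> = (t / norm (F (p (k+j)))) *\<^sub>R (F^^Suc j) (p k)"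
      using F_scale[of t] t by simp
    finally show ?case using t nF[of "k+j"] by (intro exI[of _ "t / norm (F (p (k+j)))"]) simp
  qed
  define D where "D k = Mx (p k) - mx (p k)" for k
  have D0: "D k \<ge> 0" for k using mM by (simp add: D_def)
  have Ddec: "decseq D" unfolding D_def
    by (rule decseq_SucI) (use inc dec in \<open>smt (verit)\<close>)
  have Dn: "D (k + nprim) \<le> \<theta> * D k" for k
  proof -
    obtain t where t: "t > 0" "p (k + nprim) = t *\<^sub>R T (p k)" using jump by blast
    show ?thesis using contract[OF pp[of k]] t by (simp add: D_def mx_scale Mx_scale)
  qed
  have Dq: "D (q * nprim) \<le> \<theta>^q * D 0" for q
  proof (induction q)
    case 0 show ?case by simp
  next
    case (Suc q)
    have "D (Suc q * nprim) = D (q * nprim + nprim)" by (simp add: add.commute)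
    also have "\<dots> \<le> \<theta> * D (q * nprim)" by (rule Dn)
    also have "\<dots> \<le> \<theta> * (\<theta>^q * D 0)" using Suc theta by (intro mult_left_mono) auto
    finally show ?case by simp
  qed
  define \<theta>' where "\<theta>' = max \<theta> (1/2)"
  define r where "r = root nprim \<theta>'"
  have th': "0 < \<theta>'" "\<theta>' < 1" "\<theta> \<le> \<theta>'" using theta by (auto simp: \<theta>'_def)
  have r: "0 < r" "r < 1" "r ^ nprim = \<theta>'"
    using th' nprim(1) by (auto simp: r_def real_root_pow_pos)
  define E where "E k = (D 0 / \<theta>') * r^k" for k
  have DE: "D k \<le> E k" for k
  proof -
    define q where "q = k div nprim"
    have "nprim * q \<le> k" by (simp add: q_def)
    hence "D k \<le> D (q * nprim)" using Ddec by (simp add: decseq_def mult.commute)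
    also have "\<dots> \<le> \<theta>^q * D 0" by (rule Dq)
    also have "\<dots> \<le> \<theta>'^q * D 0" using th' theta D0[of 0]
      by (intro mult_right_mono power_mono) auto
    also have "\<theta>'^q = r^(nprim * q)" using r by (simp add: power_mult)
    finally have h1: "D k \<le> r^(nprim * q) * D 0" .
    have h2: "r^(nprim * q) \<le> r^k / \<theta>'"
    proof -
      have "k = nprim * q + k mod nprim" by (simp add: q_def)
      hence "r^k = r^(nprim * q) * r^(k mod nprim)" by (metis power_add)
      moreover have "r^nprim \<le> r^(k mod nprim)"
        using r nprim(1) by (intro power_decreasing) (auto intro: less_imp_le)
      ultimately have "r^(nprim*q) * \<theta>' \<le> r^k" using r
        by (metis mult_left_mono zero_le_power less_imp_le)
      thus ?thesis using th' by (simp add: field_simps)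
    qed
    have "D k \<le> r^k / \<theta>' * D 0" using h1 h2 D0[of 0]
      by (meson mult_right_mono order_trans)
    thus ?thesis by (simp add: E_def mult.commute)
  qed
  have Esum: "summable E" unfolding E_def using r
    by (intro summable_mult summable_geometric) simp
  have Elim: "E \<longlonglongrightarrow> 0" using summable_LIMSEQ_zero[OF Esum] .
  have Dlim: "D \<longlonglongrightarrow> 0" using D0 DE by (intro tendsto_sandwich[OF _ _ tendsto_const Elim]) auto
  obtain \<rho> where \<rho>: "(\<lambda>k. Mx (p k)) \<longlonglongrightarrow> \<rho>" using decseq_convergent[OF decs, of m0] mge mM
    by (meson order_trans)
  have \<rho>0: "m0 \<le> \<rho>" using \<rho> by (rule LIMSEQ_le_const) (use mge mM order_trans in blast)
  have mlim: "(\<lambda>k. mx (p k)) \<longlonglongrightarrow> \<rho>"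
  proof -
    have "(\<lambda>k. Mx (p k) - D k) \<longlonglongrightarrow> \<rho> - 0" by (intro tendsto_diff \<rho> Dlim)
    thus ?thesis by (simp add: D_def)
  qed
  \<comment> \<open>log increments\<close>
  have normp: "norm (p (Suc k)) = 1" for k using pstep[of k] nF[of k] by simp
  have incr: "\<bar>ln (p (Suc k) $ i) - ln (p k $ i)\<bar> \<le> E k / m0" if k1: "k \<ge> 1" for k i
  proof -
    define y where "y = F (p k)"
    define m where "m = mx (p k)"
    define M where "M = Mx (p k)"
    have pk: "p k $ j > 0" for j using pp by (simp add: pos_def)
    have mp: "m > 0" using mx_pos pp by (simp add: m_def)
    have mMl: "m \<le> M" using mM by (simp add: m_def M_def)
    have nk: "norm (p k) = 1" using normp[of "k - 1"] k1 by simp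
    have ylo: "m * p k $ j \<le> y $ j" for j using mx_le pp by (simp add: m_def y_def)
    have yhi: "y $ j \<le> M * p k $ j" for j using Mx_ge pp by (simp add: M_def y_def)
    have n1: "norm (m *\<^sub>R p k) \<le> norm y"
      by (rule norm_le_componentwise_cart) (use ylo mp pk in \<open>smt (verit, best) mult_pos_pos real_norm_def vector_scaleR_component real_scaleR_def\<close>)
    have n2: "norm y \<le> norm (M *\<^sub>R p k)"
      by (rule norm_le_componentwise_cart) (use ylo yhi mp pk in \<open>smt (verit, best) mult_pos_pos real_norm_def vector_scaleR_component real_scaleR_def\<close>)
    have ny1: "m \<le> norm y" using n1 mp nk by simp
    have ny2: "norm y \<le> M" using n2 mp mMl nk by simp
    have yi: "y $ i > 0" using ylo[of i] mp pk[of i] by (smt (verit) mult_pos_pos)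
    define ra where "ra = p (Suc k) $ i / p k $ i"
    have ra: "ra = y $ i / (norm y * p k $ i)" using pstep[of k] by (simp add: ra_def y_def)
    have "norm y * p k $ i > 0" using mp ny1 pk[of i] by (intro mult_pos_pos) auto
    hence ra0: "ra > 0" using ra yi by simp
    have rahi: "ra \<le> M / m"
    proof -
      have "ra \<le> (M * p k $ i) / (m * p k $ i)" unfolding ra
        using yhi[of i] ny1 pk[of i] mp yi
        by (intro frac_le) (auto intro: mult_right_mono)
      thus ?thesis using pk[of i] by simp
    qed
    have ralo: "m / M \<le> ra"
    proof -
      have "(m * p k $ i) / (M * p k $ i) \<le> ra" unfolding ra
        using ylo[of i] ny2 pk[of i] mp mMl yi \<open>norm y * p k $ i > 0\<close>
        by (intro frac_le) (auto intro: mult_right_mono)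
      thus ?thesis using pk[of i] by simp
    qed
    have "ln (p (Suc k) $ i) - ln (p k $ i) = ln ra"
    proof -
      have "p (Suc k) $ i > 0" using pp[of "Suc k"] by (simp add: pos_def)
      thus ?thesis using pk[of i] unfolding ra_def by (simp add: ln_div)
    qed
    moreover have "ln ra \<le> ln (M / m)" using rahi ra0 by simp
    moreover have "ln (m / M) \<le> ln ra" using ralo ra0 mp mMl by simp
    moreover have "ln (m / M) = - ln (M / m)" using mp mMl by (simp add: ln_div)
    moreover have "ln (M / m) \<le> M / m - 1" using mp mMl by (intro ln_le_minus_one) simp
    moreover have "M / m - 1 = D k / m" using mp by (simp add: D_def M_def m_def field_simps)
    moreover have "D k / m \<le> E k / m0"
      using DE[of k] D0[of k] mge[of k] m0p mp
      by (smt (verit, best) divide_le_cancel frac_le m_def)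
    ultimately show ?thesis by linarith
  qed
  have conv: "\<exists>L. (\<lambda>k. p k $ i) \<longlonglongrightarrow> L \<and> L > 0" for i
  proof -
    define d where "d k = ln (p (Suc k) $ i) - ln (p k $ i)" for k
    have "summable (\<lambda>k. E k / m0)" using Esum by (simp add: summable_divide)
    hence sd: "summable d"
      by (rule summable_comparison_test'[where N=1]) (use incr in \<open>simp add: d_def\<close>)
    have "(\<lambda>k. \<Sum>j<k. d j) \<longlonglongrightarrow> suminf d" by (rule summable_LIMSEQ[OF sd])
    hence "(\<lambda>k. ln (p k $ i) - ln (p 0 $ i)) \<longlonglongrightarrow> suminf d"
      by (simp add: d_def sum_lessThan_telescope[of "\<lambda>j. ln (p j $ i)"])
    hence "(\<lambda>k. (ln (p k $ i) - ln (p 0 $ i)) + ln (p 0 $ i)) \<longlonglongrightarrow> suminf d + ln (p 0 $ i)"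
      by (intro tendsto_add tendsto_const)
    hence "(\<lambda>k. exp (ln (p k $ i))) \<longlonglongrightarrow> exp (suminf d + ln (p 0 $ i))"
      by (intro tendsto_exp) simp
    moreover have "exp (ln (p k $ i)) = p k $ i" for k using pp by (simp add: pos_def)
    ultimately show ?thesis by (intro exI[of _ "exp (suminf d + ln (p 0 $ i))"]) simp
  qed
  define q where "q = (\<chi> i. SOME L. (\<lambda>k. p k $ i) \<longlonglongrightarrow> L \<and> L > 0)"
  have qi: "(\<lambda>k. p k $ i) \<longlonglongrightarrow> q $ i \<and> q $ i > 0" for i
    unfolding q_def using someI_ex[OF conv[of i]] by simp
  have pq: "p \<longlonglongrightarrow> q" using qi by (intro vec_tendstoI) simp
  have qpos: "pos q" using qi by (simp add: pos_def)
  have Fq: "F q $ i = \<rho> * q $ i" for i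
  proof (rule antisym)
    have l1: "(\<lambda>k. Mx (p k) * p k $ i) \<longlonglongrightarrow> \<rho> * q $ i" using \<rho> qi by (intro tendsto_mult) auto
    have l2: "(\<lambda>k. mx (p k) * p k $ i) \<longlonglongrightarrow> \<rho> * q $ i" using mlim qi by (intro tendsto_mult) auto
    show "F q $ i \<le> \<rho> * q $ i"
      by (rule LIMSEQ_le[OF F_vec_tendsto[OF pq] l1]) (use Mx_ge pp in blast)
    show "\<rho> * q $ i \<le> F q $ i"
      by (rule LIMSEQ_le[OF l2 F_vec_tendsto[OF pq]]) (use mx_le pp in blast)
  qed
  show ?thesis
    using \<rho>0 m0p qpos Fq \<rho> pq by (intro exI[of _ \<rho>] exI[of _ q]) (auto simp: vec_eq_iff)
qed

end



definition eigset :: "real^'n::finite^'n \<Rightarrow> real set" where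
  "eigset A = cmod ` {c. \<exists>v::complex^'n. v \<noteq> 0 \<and>
      (\<chi> i j. complex_of_real (A $ i $ j)) *v v = c *s v}"

lemma sr_eigset: "spectral_radius A = Sup (eigset A)"
  unfolding spectral_radius_def eigset_def ..

lemma real_eig:
  fixes Z :: "real^'n::finite^'n"
  assumes "Z *v q = \<rho> *\<^sub>R q" "\<forall>i. q$i > 0" "\<rho> \<ge> 0"
  shows "\<rho> \<in> eigset Z"
proof -
  define v :: "complex^'n" where "v = (\<chi> i. complex_of_real (q$i))"
  obtain i :: 'n where True by simp
  have "q$i > 0" using assms(2) by blast
  hence "v$i \<noteq> 0" by (simp add: v_def)
  hence "v \<noteq> 0" by auto
  moreover have "(\<chi> i j. complex_of_real (Z $ i $ j)) *v v = complex_of_real \<rho> *s v"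
  proof -
    have "(\<Sum>j\<in>UNIV. complex_of_real (Z$i$j) * complex_of_real (q$j)) = complex_of_real (\<rho> * q$i)" for i
    proof -
      have "(Z *v q)$i = \<rho> * q$i" using assms(1) by simp
      hence "(\<Sum>j\<in>UNIV. Z$i$j * q$j) = \<rho> * q$i" by (simp add: matrix_vector_mult_def)
      hence "complex_of_real (\<Sum>j\<in>UNIV. Z$i$j * q$j) = complex_of_real (\<rho> * q$i)" by simp
      thus ?thesis by (simp add: of_real_sum)
    qed
    thus ?thesis by (simp add: matrix_vector_mult_def v_def vec_eq_iff)
  qed
  ultimately have "cmod (complex_of_real \<rho>) \<in> eigset Z" unfolding eigset_def by blast
  thus ?thesis using assms(3) by simp
qed

context maxsys begin

lemma single: assumes "Z \<in> Zs" shows "maxsys {Z}"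
proof
  show "finite {Z}" "{Z} \<noteq> {}" by auto
  show "\<And>Z' i j. Z' \<in> {Z} \<Longrightarrow> 0 \<le> Z' $ i $ j" using nonneg assms by auto
  show "\<And>x. \<exists>Z'\<in>{Z}. \<forall>Z''\<in>{Z}. \<forall>i. (Z'' *v x) $ i \<le> (Z' *v x) $ i" by auto
  show "primitive_set {Z}"
    unfolding primitive_set_def using nprim assms by (intro exI[of _ nprim]) auto
qed

lemma eigset_ne: assumes "Z \<in> Zs" shows "eigset Z \<noteq> {}"
proof -
  interpret S: maxsys "{Z}" by (rule single[OF assms])
  define h where "h x = (1 / norm (S.F x)) *\<^sub>R S.F x" for x
  define p where "p k = (h ^^ k) (\<chi> i. 1)" for k
  have "S.pos (p 0)" by (simp add: p_def S.pos_def)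
  moreover have "p (Suc k) = (1 / norm (S.F (p k))) *\<^sub>R S.F (p k)" for k
    by (simp add: p_def h_def)
  ultimately obtain \<rho> q where rq: "\<rho> > 0" "S.pos q" "S.F q = \<rho> *\<^sub>R q"
    using S.iteration by blast
  obtain Z' where "Z' \<in> {Z}" "S.F q = Z' *v q" using S.F_eq by blast
  hence "Z *v q = \<rho> *\<^sub>R q" using rq by simp
  hence "\<rho> \<in> eigset Z" using rq by (intro real_eig) (auto simp: S.pos_def)
  thus ?thesis by blast
qed

lemma sr_max: assumes r0: "\<rho> > 0" and q: "pos q" and Fq: "F q = \<rho> *\<^sub>R q"
  shows "Max (spectral_radius ` Zs) = \<rho>"
proof -
  have bound: "x \<le> \<rho>" if "Z \<in> Zs" "x \<in> eigset Z" for Z x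
  proof -
    from that(2) obtain c v where cv: "x = cmod c" "v \<noteq> 0"
      "(\<chi> i j. complex_of_real (Z $ i $ j)) *v v = c *s v"
      unfolding eigset_def by blast
    have "(Z *v q)$i \<le> \<rho> * q$i" for i using F_ge[OF that(1), of q i] Fq by simp
    moreover have "cmat Z *v v = c *s v" using cv(3) by (simp add: cmat_def)
    ultimately have "cmod c \<le> \<rho>" using cv(2) nonneg[OF that(1)] q
      by (intro eigen_bound[of Z q \<rho> v c]) (auto simp: pos_def)
    thus ?thesis using cv(1) by simp
  qed
  have le: "spectral_radius Z \<le> \<rho>" if "Z \<in> Zs" for Z
    unfolding sr_eigset using eigset_ne[OF that] bound[OF that] by (intro cSup_least) auto
  obtain Z0 where Z0: "Z0 \<in> Zs" "F q = Z0 *v q" using F_eq by blast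
  have "\<rho> \<in> eigset Z0" using Z0 Fq q r0 by (intro real_eig) (auto simp: pos_def)
  moreover have "bdd_above (eigset Z0)" using bound[OF Z0(1)] by (intro bdd_aboveI) auto
  ultimately have "\<rho> \<le> spectral_radius Z0" unfolding sr_eigset by (rule cSup_upper)
  hence "spectral_radius Z0 = \<rho>" using le[OF Z0(1)] by simp
  thus ?thesis using le Z0(1) fin by (intro Max_eqI) auto
qed

lemma beta_eq: assumes "pos x" shows "Min ((\<lambda>i. x$i / F x $ i) ` UNIV) = 1 / Mx x"
proof -
  have "Mx x \<in> (\<lambda>i. F x $ i / x $ i) ` UNIV" unfolding Mx_def by (rule Max_in) auto
  then obtain i0 where i0: "Mx x = F x $ i0 / x $ i0" by blast
  have Fp: "F x $ i > 0" "x $ i > 0" for i using F_pos[OF assms] assms by (auto simp: pos_def)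
  show ?thesis
  proof (rule Min_eqI)
    show "finite ((\<lambda>i. x$i / F x $ i) ` UNIV)" by simp
    show "1 / Mx x \<in> (\<lambda>i. x$i / F x $ i) ` UNIV" using i0 by simp
    fix y assume "y \<in> (\<lambda>i. x$i / F x $ i) ` UNIV"
    then obtain i where y: "y = x$i / F x $ i" by blast
    have "F x $ i / x $ i \<le> Mx x" unfolding Mx_def by (rule Max_ge) auto
    moreover have "0 < F x $ i / x $ i" using Fp[of i] by simp
    ultimately have "0 < Mx x * (F x $ i / x $ i)" by (intro mult_pos_pos) auto
    hence "1 / Mx x \<le> 1 / (F x $ i / x $ i)" using \<open>F x $ i / x $ i \<le> Mx x\<close>
      by (intro divide_left_mono) auto
    thus "1 / Mx x \<le> y" using y by simp
  qed
qed

end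



definition rc :: "('n::finite \<Rightarrow> nat \<Rightarrow> 'n \<Rightarrow> real) \<Rightarrow> real^'n \<Rightarrow> 'n \<Rightarrow> nat \<Rightarrow> 'n \<Rightarrow> real" where
  "rc g mu i k j = (if j = i then 0 else mu$i * g i k j / g i k i)"

definition Zk :: "('n::finite \<Rightarrow> nat \<Rightarrow> 'n \<Rightarrow> real) \<Rightarrow> real^'n \<Rightarrow> ('n \<Rightarrow> nat) \<Rightarrow> real^'n^'n" where
  "Zk g mu \<kappa> = mat 1 - (\<chi> i. a_row g mu i (\<kappa> i))"

lemma Zk_entry: "Zk g mu \<kappa> $ i $ j = rc g mu i (\<kappa> i) j"
  by (simp add: Zk_def rc_def mat_def a_row_def)

lemma Zset_eq: "Zset K g mu = Zk g mu ` {\<kappa>. \<forall>i. \<kappa> i < K i}"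
  unfolding Zset_def Gset_def Zk_def by blast

lemma Kset_fin: "finite {\<kappa>::'n::finite\<Rightarrow>nat. \<forall>i. \<kappa> i < K i}"
proof -
  have "{\<kappa>::'n\<Rightarrow>nat. \<forall>i. \<kappa> i < K i} = PiE UNIV (\<lambda>i. {..<K i})"
    by (auto simp: PiE_iff)
  thus ?thesis by (simp add: finite_PiE)
qed

lemma row_val: "(unit_vec i - a_row g mu i k) \<bullet> x = (\<Sum>j\<in>UNIV. rc g mu i k j * x$j)"
  unfolding inner_vec_def unit_vec_def a_row_def rc_def
  by (intro sum.cong) auto

lemma Zk_mv: "(Zk g mu \<kappa> *v x)$i = (unit_vec i - a_row g mu i (\<kappa> i)) \<bullet> x"
  by (simp add: row_val matrix_vector_mult_def Zk_entry)

theorem theorem3: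
  fixes K :: "'n::finite \<Rightarrow> nat"
    and g :: "'n \<Rightarrow> nat \<Rightarrow> 'n \<Rightarrow> real"
    and sigma2 :: real
    and mu :: "real^'n"
    and p :: "nat \<Rightarrow> real^'n"
  assumes K_pos: "\<forall>i. K i \<ge> 1"
    and g_nonneg: "\<forall>i k j. k < K i \<longrightarrow> g i k j \<ge> 0"
    and g_direct: "\<forall>i k. k < K i \<longrightarrow> g i k i > 0"
    and sigma_pos: "sigma2 > 0"
    and mu_pos: "\<forall>i. mu $ i > 0"
    and irred: "\<forall>Z\<in>Zset K g mu. irreducible_mat Z"
    and prim: "primitive_set (Zset K g mu)"
    and p0: "\<forall>i. p 0 $ i > 0"
    and p_step: "\<forall>k. p (Suc k) = (1 / norm (yvec K g mu (p k))) *\<^sub>R yvec K g mu (p k)"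
  shows "(\<lambda>k. beta_of K g mu (p k)) \<longlonglongrightarrow> 1 / Max (spectral_radius ` Zset K g mu)
    \<and> (\<exists>pstar. p \<longlonglongrightarrow> pstar \<and>
         ((\<lambda>\<alpha>. Gamma K g sigma2 (\<alpha> *\<^sub>R pstar))
            \<longlongrightarrow> (1 / Max (spectral_radius ` Zset K g mu)) *\<^sub>R mu) at_top)"
proof -
  define R where "R i k x = (unit_vec i - a_row g mu i k) \<bullet> x" for i k and x :: "real^'n"
  define Zs where "Zs = Zset K g mu"
  define Ks where "Ks = {\<kappa>::'n\<Rightarrow>nat. \<forall>i. \<kappa> i < K i}"
  have ZsK: "Zs = Zk g mu ` Ks" by (simp add: Zs_def Ks_def Zset_eq)
  have rc_nn: "rc g mu i k j \<ge> 0" if "k < K i" for i k j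
  proof -
    have "mu$i \<ge> 0" "g i k j \<ge> 0" "g i k i > 0" using g_nonneg g_direct mu_pos that
      by (auto intro: less_imp_le)
    thus ?thesis unfolding rc_def by (simp add: divide_nonneg_pos)
  qed
  have K0: "0 < K i" for i using K_pos by (simp add: Suc_le_eq)
  have single_k: "(\<lambda>j. if j = i then k else 0) \<in> Ks" if "k < K i" for i k
    using that K0 by (auto simp: Ks_def)
  have ms: "maxsys Zs"
  proof
    show "finite Zs" unfolding ZsK Ks_def by (intro finite_imageI Kset_fin)
    show "Zs \<noteq> {}" using ZsK K0 by (auto simp: Ks_def intro!: exI[of _ "\<lambda>_. 0"])
    show "0 \<le> Z $ i $ j" if "Z \<in> Zs" for Z i j
      using that rc_nn by (auto simp: ZsK Ks_def Zk_entry)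
    show "\<exists>Z\<in>Zs. \<forall>Z'\<in>Zs. \<forall>i. (Z' *v x) $ i \<le> (Z *v x) $ i" for x
    proof -
      have am: "\<exists>k. k < K i \<and> (\<forall>k'<K i. R i k' x \<le> R i k x)" for i
      proof -
        have "Max ((\<lambda>k. R i k x) ` {..<K i}) \<in> (\<lambda>k. R i k x) ` {..<K i}"
          by (rule Max_in) (use K0 in auto)
        then obtain k where k: "k < K i" "R i k x = Max ((\<lambda>k. R i k x) ` {..<K i})" by auto
        thus ?thesis by (intro exI[of _ k]) auto
      qed
      define \<kappa> where "\<kappa> i = (SOME k. k < K i \<and> (\<forall>k'<K i. R i k' x \<le> R i k x))" for i
      have \<kappa>: "\<kappa> i < K i \<and> (\<forall>k'<K i. R i k' x \<le> R i (\<kappa> i) x)" for i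
        unfolding \<kappa>_def by (rule someI_ex[OF am])
      have "Zk g mu \<kappa> \<in> Zs" using \<kappa> by (auto simp: ZsK Ks_def)
      moreover have "\<forall>Z'\<in>Zs. \<forall>i. (Z' *v x) $ i \<le> (Zk g mu \<kappa> *v x) $ i"
        using \<kappa> by (auto simp: ZsK Ks_def Zk_mv R_def)
      ultimately show ?thesis by blast
    qed
    show "primitive_set Zs" using prim by (simp add: Zs_def)
  qed
  interpret M: maxsys Zs by (rule ms)
  have img: "(\<lambda>Z. (Z *v x)$i) ` Zs = (\<lambda>k. R i k x) ` {..<K i}" for i x
  proof
    show "(\<lambda>Z. (Z *v x)$i) ` Zs \<subseteq> (\<lambda>k. R i k x) ` {..<K i}"
      by (auto simp: ZsK Ks_def Zk_mv R_def)
    show "(\<lambda>k. R i k x) ` {..<K i} \<subseteq> (\<lambda>Z. (Z *v x)$i) ` Zs"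
    proof
      fix y assume "y \<in> (\<lambda>k. R i k x) ` {..<K i}"
      then obtain k where k: "k < K i" "y = R i k x" by auto
      have "Zk g mu (\<lambda>j. if j = i then k else 0) \<in> Zs" using single_k[OF k(1)] by (simp add: ZsK)
      moreover have "(Zk g mu (\<lambda>j. if j = i then k else 0) *v x)$i = y"
        using k by (simp add: Zk_mv R_def)
      ultimately show "y \<in> (\<lambda>Z. (Z *v x)$i) ` Zs" by (metis image_eqI)
    qed
  qed
  have yF: "yvec K g mu x = M.F x" for x
    unfolding yvec_def M.F_def using img by (simp add: R_def)
  have p0': "M.pos (p 0)" using p0 by (simp add: M.pos_def)
  have ps': "\<And>k. p (Suc k) = (1 / norm (M.F (p k))) *\<^sub>R M.F (p k)" using p_step yF by simp
  obtain \<rho> q where rq: "\<rho> > 0" "M.pos q" "M.F q = \<rho> *\<^sub>R q" "(\<lambda>k. M.Mx (p k)) \<longlonglongrightarrow> \<rho>" "p \<longlonglongrightarrow> q"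
    using M.iteration[OF p0' ps'] by blast
  have MaxE: "Max (spectral_radius ` Zset K g mu) = \<rho>"
    using M.sr_max[OF rq(1-3)] by (simp add: Zs_def)
  have pp: "M.pos (p k)" for k
  proof (induction k)
    case 0 show ?case using p0' .
  next
    case (Suc k)
    thus ?case using ps'[of k] M.F_pos M.pos_norm M.pos_scale by simp
  qed
  have beta: "beta_of K g mu (p k) = 1 / M.Mx (p k)" for k
    unfolding beta_of_def yF using M.beta_eq[OF pp[of k]] .
  have part1: "(\<lambda>k. beta_of K g mu (p k)) \<longlonglongrightarrow> 1 / \<rho>"
    unfolding beta using rq(1,4) by (intro tendsto_divide tendsto_const) auto
  have Gam: "((\<lambda>\<alpha>. Gamma K g sigma2 (\<alpha> *\<^sub>R q) $ i) \<longlongrightarrow> mu $ i / \<rho>) at_top" for i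
  proof -
    define S where "S k = (\<Sum>j\<in>UNIV-{i}. g i k j * q$j)" for k
    have qp: "q$j > 0" for j using rq(2) by (simp add: M.pos_def)
    have Fqi: "M.F q $ i = \<rho> * q$i" using rq(3) by simp
    have Rs: "R i k q = mu$i / g i k i * S k" for k
    proof -
      have "R i k q = (\<Sum>j\<in>UNIV. rc g mu i k j * q$j)" by (simp add: R_def row_val)
      also have "\<dots> = (\<Sum>j\<in>UNIV-{i}. rc g mu i k j * q$j)"
        by (subst sum.remove[of UNIV i]) (auto simp: rc_def)
      also have "\<dots> = (\<Sum>j\<in>UNIV-{i}. mu$i / g i k i * (g i k j * q$j))"
        by (intro sum.cong) (auto simp: rc_def)
      finally show ?thesis by (simp add: S_def sum_distrib_left)
    qed
    have Sp: "S k > 0" if k: "k < K i" for k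
    proof -
      obtain l where l: "Zk g mu (\<lambda>j. if j = i then k else 0) $ i $ l > 0"
        using M.row_pos single_k[OF k] ZsK by blast
      hence l': "rc g mu i k l > 0" by (simp add: Zk_entry)
      hence li: "l \<noteq> i" by (auto simp: rc_def)
      have "mu$i * g i k l / g i k i > 0" using l' li by (simp add: rc_def)
      moreover have "mu$i > 0" "g i k i > 0" using mu_pos g_direct k by auto
      ultimately have "g i k l > 0" by (smt (verit) divide_nonpos_pos mult_nonneg_nonpos less_imp_le)
      hence "0 < g i k l * q$l" using qp by simp
      also have "\<dots> \<le> S k" unfolding S_def using li g_nonneg k qp
        by (intro member_le_sum) (auto simp: less_imp_le)
      finally show ?thesis .
    qed
    define L where "L k = g i k i * q$i / S k" for k
    have lim: "((\<lambda>\<alpha>. sinr_k g sigma2 (\<alpha> *\<^sub>R q) i k) \<longlongrightarrow> L k) at_top" if k: "k < K i" for k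
    proof -
      have ev: "eventually (\<lambda>\<alpha>. sinr_k g sigma2 (\<alpha> *\<^sub>R q) i k = g i k i * q$i / (S k + sigma2 / \<alpha>)) at_top"
        using eventually_gt_at_top[of "0::real"]
      proof (rule eventually_mono)
        fix \<alpha> :: real assume a: "\<alpha> > 0"
        have "sinr_k g sigma2 (\<alpha> *\<^sub>R q) i k = g i k i * (\<alpha> * q$i) / (\<alpha> * S k + sigma2)"
          by (simp add: sinr_k_def S_def sum_distrib_left mult.left_commute)
        also have "\<dots> = g i k i * q$i / (S k + sigma2 / \<alpha>)"
          using a Sp[OF k] sigma_pos by (simp add: field_simps)
        finally show "sinr_k g sigma2 (\<alpha> *\<^sub>R q) i k = g i k i * q$i / (S k + sigma2 / \<alpha>)" .
      qed
      have "((\<lambda>\<alpha>::real. sigma2 / \<alpha>) \<longlongrightarrow> 0) at_top"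
        by (rule tendsto_divide_0[OF tendsto_const filterlim_at_top_imp_at_infinity[OF filterlim_ident]])
      hence "((\<lambda>\<alpha>. g i k i * q$i / (S k + sigma2 / \<alpha>)) \<longlongrightarrow> g i k i * q$i / (S k + 0)) at_top"
        using Sp[OF k] by (intro tendsto_divide tendsto_const tendsto_add) auto
      thus ?thesis using tendsto_cong[OF ev] by (simp add: L_def)
    qed
    have Rle: "R i k q \<le> \<rho> * q$i" if "k < K i" for k
    proof -
      have "R i k q \<le> Max ((\<lambda>k. R i k q) ` {..<K i})" using that by (intro Max_ge) auto
      also have "\<dots> = M.F q $ i"
      proof -
        have "yvec K g mu q $ i = M.F q $ i" by (simp add: yF)
        thus ?thesis by (simp add: yvec_def R_def)
      qed
      finally show ?thesis using Fqi by simp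
    qed
    have LR: "L k = mu$i * q$i / R i k q" if "k < K i" for k
    proof -
      have "mu$i > 0" "g i k i > 0" using g_direct that mu_pos by auto
      thus ?thesis using Sp[OF that] unfolding L_def Rs by (simp add: field_simps)
    qed
    have Rpos: "R i k q > 0" if "k < K i" for k
      using Sp[OF that] g_direct that mu_pos unfolding Rs by simp
    have minL: "Min (L ` {..<K i}) = mu$i / \<rho>"
    proof (rule Min_eqI)
      show "finite (L ` {..<K i})" by simp
      fix y assume "y \<in> L ` {..<K i}"
      then obtain k where k: "k < K i" "y = L k" by auto
      have "mu$i * q$i / (\<rho> * q$i) \<le> mu$i * q$i / R i k q"
      proof -
        have "mu$i > 0" using mu_pos by auto
        hence "0 \<le> mu$i * q$i" using qp[of i] by simp
        thus ?thesis using Rle[OF k(1)] Rpos[OF k(1)] by (intro divide_left_mono) auto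
      qed
      moreover have "q$i \<noteq> 0" using qp[of i] by simp
      ultimately show "mu$i / \<rho> \<le> y" using k LR by simp
    next
      have "Max ((\<lambda>k. R i k q) ` {..<K i}) \<in> (\<lambda>k. R i k q) ` {..<K i}"
        by (rule Max_in) (use K0 in auto)
      moreover have "Max ((\<lambda>k. R i k q) ` {..<K i}) = \<rho> * q$i"
      proof -
        have "yvec K g mu q $ i = M.F q $ i" by (simp add: yF)
        thus ?thesis using Fqi by (simp add: yvec_def R_def)
      qed
      ultimately obtain k0 where k0: "k0 < K i" "R i k0 q = \<rho> * q$i" by auto
      have "q$i \<noteq> 0" using qp[of i] by simp
      hence "L k0 = mu$i / \<rho>" using LR[OF k0(1)] k0(2) by simp
      thus "mu$i / \<rho> \<in> L ` {..<K i}" using k0(1) by (metis image_eqI lessThan_iff)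
    qed
    have "((\<lambda>\<alpha>. Min ((\<lambda>k. sinr_k g sigma2 (\<alpha> *\<^sub>R q) i k) ` {..<K i})) \<longlongrightarrow> Min (L ` {..<K i})) at_top"
      by (rule tendsto_Min_finite) (use K0 lim in auto)
    thus ?thesis unfolding minL by (simp add: Gamma_def sinr_def)
  qed
  have part2: "((\<lambda>\<alpha>. Gamma K g sigma2 (\<alpha> *\<^sub>R q)) \<longlongrightarrow> (1 / \<rho>) *\<^sub>R mu) at_top"
    by (rule vec_tendstoI) (use Gam in simp)
  show ?thesis unfolding MaxE using part1 part2 rq(5) by blast
qed



end
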